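(* The only (one-sided) infinite binary words that contain no $3$-antipower as a factor are the words $0^\omega$, $(01)^\omega$, $110^\omega$, $1010^\omega$, $0^i10^\omega$ for $i \geq 0$, and their bitwise complements.
   Context: A $3$-antipower is a finite word $u_1u_2u_3$ with $|u_1|=|u_2|=|u_3|$ and $u_1,u_2,u_3$ pairwise distinct; a factor is a contiguous subword. For a finite word $x$, $x^\omega$ is the one-sided infinite word $xxx\cdots$. The bitwise complement exchanges $0$ and $1$. *)

theory Defs
  imports Main
begin

text \<open>Binary alphabet: the letter 0 is False, the letter 1 is True.
  One-sided infinite words are functions nat => letter.\<close>

definition is_3antipower :: "'a list \<Rightarrow> bool" where
  "is_3antipower v \<longleftrightarrow> (\<exists>u1 u2 u3. v = u1 @ u2 @ u3 \<and>
      length u1 = length u2 \<and> length u2 = length u3 \<and>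
      u1 \<noteq> u2 \<and> u1 \<noteq> u3 \<and> u2 \<noteq> u3)"

definition factor :: "(nat \<Rightarrow> 'a) \<Rightarrow> nat \<Rightarrow> nat \<Rightarrow> 'a list" where
  "factor w i n = map (\<lambda>k. w (i + k)) [0..<n]"

definition contains_3antipower :: "(nat \<Rightarrow> 'a) \<Rightarrow> bool" where
  "contains_3antipower w \<longleftrightarrow> (\<exists>i n. is_3antipower (factor w i n))"

text \<open>x^omega for a nonempty finite word x\<close>
definition omega :: "'a list \<Rightarrow> nat \<Rightarrow> 'a" where
  "omega x n = x ! (n mod length x)"

definition prepend :: "'a list \<Rightarrow> (nat \<Rightarrow> 'a) \<Rightarrow> nat \<Rightarrow> 'a" where
  "prepend u w n = (if n < length u then u ! n else w (n - length u))"

definition complement :: "(nat \<Rightarrow> bool) \<Rightarrow> nat \<Rightarrow> bool" where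
  "complement w n = (\<not> w n)"

definition base_words :: "(nat \<Rightarrow> bool) set" where
  "base_words =
     {omega [False],
      omega [False, True],
      prepend [True, True] (omega [False]),
      prepend [True, False, True] (omega [False])}
     \<union> {prepend (replicate i False @ [True]) (omega [False]) | i. True}"

end

theory Submission
  imports Defs
begin


lemma factor_len[simp]: "length (factor w i n) = n"
  by (simp add: factor_def)

lemma factor_nth[simp]: "k < n \<Longrightarrow> factor w i n ! k = w (i + k)"
  by (simp add: factor_def)

lemma factor_add: "factor w i (a + b) = factor w i a @ factor w (i + a) b"
  by (rule nth_equalityI) (auto simp: nth_append add.assoc)

lemma factor_eq_iff: "factor w i n = factor w j n \<longleftrightarrow> (\<forall>k<n. w (i + k) = w (j + k))"
  by (simp add: list_eq_iff_nth_eq)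

lemma contains_iff: "contains_3antipower w \<longleftrightarrow> (\<exists>s n. factor w s n \<noteq> factor w (s+n) n \<and>
   factor w s n \<noteq> factor w (s+2*n) n \<and> factor w (s+n) n \<noteq> factor w (s+2*n) n)"
proof
  assume "contains_3antipower w"
  then obtain i m u1 u2 u3 where v: "factor w i m = u1 @ u2 @ u3" and l: "length u1 = length u2" "length u2 = length u3"
    and d: "u1 \<noteq> u2" "u1 \<noteq> u3" "u2 \<noteq> u3"
    unfolding contains_3antipower_def is_3antipower_def by blast
  define n where "n = length u1"
  have m: "m = n + (n + n)" using arg_cong[OF v, of length] l by (simp add: n_def)
  have "factor w i m = factor w i n @ factor w (i+n) n @ factor w (i+2*n) n"
    unfolding m factor_add by (simp add: add.assoc mult_2)
  with v l n_def have "u1 = factor w i n \<and> u2 = factor w (i+n) n \<and> u3 = factor w (i+2*n) n"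
    by (simp add: append_eq_append_conv)
  with d show "\<exists>s n. factor w s n \<noteq> factor w (s+n) n \<and>
   factor w s n \<noteq> factor w (s+2*n) n \<and> factor w (s+n) n \<noteq> factor w (s+2*n) n" by blast
next
  assume "\<exists>s n. factor w s n \<noteq> factor w (s+n) n \<and>
   factor w s n \<noteq> factor w (s+2*n) n \<and> factor w (s+n) n \<noteq> factor w (s+2*n) n"
  then obtain s n where d: "factor w s n \<noteq> factor w (s+n) n"
   "factor w s n \<noteq> factor w (s+2*n) n" "factor w (s+n) n \<noteq> factor w (s+2*n) n" by blast
  have "factor w s (n + (n + n)) = factor w s n @ factor w (s+n) n @ factor w (s+2*n) n"
    unfolding factor_add by (simp add: add.assoc mult_2)
  then show "contains_3antipower w" unfolding contains_3antipower_def is_3antipower_def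
    using d by (metis factor_len)
qed

lemma witness:
  assumes "a < n" "b < n" "c < n" "w (s+a) \<noteq> w (s+n+a)" "w (s+b) \<noteq> w (s+2*n+b)" "w (s+n+c) \<noteq> w (s+2*n+c)"
  shows "contains_3antipower w"
  unfolding contains_iff factor_eq_iff using assms by blast

definition has_anti :: "bool list \<Rightarrow> bool" where
  "has_anti xs = (\<exists>n \<in> set [1..<length xs + 1]. \<exists>s \<in> set [0..<length xs + 1]. s + 3*n \<le> length xs \<and>
     take n (drop s xs) \<noteq> take n (drop (s+n) xs) \<and> take n (drop s xs) \<noteq> take n (drop (s+2*n) xs) \<and>
     take n (drop (s+n) xs) \<noteq> take n (drop (s+2*n) xs))"

lemma take_drop_factor: "s + n \<le> L \<Longrightarrow> take n (drop s (factor w i L)) = factor w (i+s) n"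
  by (rule nth_equalityI) (auto simp: add.assoc)

lemma has_anti_factor: "has_anti (factor w i L) \<Longrightarrow> contains_3antipower w"
  unfolding has_anti_def contains_iff
  apply (clarsimp simp: take_drop_factor)
  subgoal for n s by (rule exI[of _ "i+s"], rule exI[of _ n]) (simp add: add.assoc)
  done

fun bwords :: "nat \<Rightarrow> bool list list" where
  "bwords 0 = [[]]"
| "bwords (Suc k) = concat (map (\<lambda>x. [False # x, True # x]) (bwords k))"

lemma bwords_complete: "length R = k \<Longrightarrow> R \<in> set (bwords k)"
proof (induction k arbitrary: R)
  case 0 then show ?case by simp
next
  case (Suc k)
  obtain x R' where "R = x # R'" "length R' = k" using Suc.prems by (cases R) auto
  with Suc.IH show ?case by (cases x) auto
qed

lemma fin1: "\<forall>R\<in>set (bwords 5). has_anti ([True,False,False,True] @ R)"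
  by code_simp
lemma fin2: "\<forall>R\<in>set (bwords 7). has_anti ([True,False,False,False,True] @ R)"
  by code_simp

lemma fin3: "\<forall>R\<in>set (bwords 5). has_anti ([True,False,False,False,False,False,True] @ R)"
  by code_simp
lemma fin1': "\<forall>R\<in>set (bwords 5). has_anti ([False,True,True,False] @ R)"
  by code_simp
lemma fin2': "\<forall>R\<in>set (bwords 7). has_anti ([False,True,True,True,False] @ R)"
  by code_simp
lemma fin3': "\<forall>R\<in>set (bwords 5). has_anti ([False,True,True,True,True,True,False] @ R)"
  by code_simp

lemma factor_0[simp]: "factor w i 0 = []"
  by (simp add: factor_def)

lemma factor_Suc: "factor w i (Suc n) = w i # factor w (Suc i) n"
  by (rule nth_equalityI) (auto simp: nth_Cons split: nat.split)

lemma INT: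
  assumes c1: "w i = c" and c2: "w (i+d) = c" and mid: "\<And>k. i<k \<Longrightarrow> k<i+d \<Longrightarrow> w k = (\<not>c)" and d3: "3 \<le> d"
  shows "contains_3antipower w"
proof -
  consider "d = 3" | "d = 4" | "d = 6" | "5 \<le> d \<and> d \<noteq> 6" using d3 by linarith
  then show ?thesis
  proof cases
    case 1
    have e: "factor w i (4+5) = [c,\<not>c,\<not>c,c] @ factor w (i+4) 5"
      unfolding factor_add using c1 c2 mid[of "i+1"] mid[of "i+2"] 1
      by (simp add: factor_Suc numeral_eq_Suc)
    have "factor w (i+4) 5 \<in> set (bwords 5)" by (rule bwords_complete) simp
    then have "has_anti (factor w i (4+5))" unfolding e using fin1 fin1' by (cases c) auto
    then show ?thesis by (rule has_anti_factor)
  next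
    case 2
    have e: "factor w i (5+7) = [c,\<not>c,\<not>c,\<not>c,c] @ factor w (i+5) 7"
      unfolding factor_add using c1 c2 mid[of "i+1"] mid[of "i+2"] mid[of "i+3"] 2
      by (simp add: factor_Suc numeral_eq_Suc)
    have "factor w (i+5) 7 \<in> set (bwords 7)" by (rule bwords_complete) simp
    then have "has_anti (factor w i (5+7))" unfolding e using fin2 fin2' by (cases c) auto
    then show ?thesis by (rule has_anti_factor)
  next
    case 3
    have e: "factor w i (7+5) = [c,\<not>c,\<not>c,\<not>c,\<not>c,\<not>c,c] @ factor w (i+7) 5"
      unfolding factor_add using c1 c2 mid[of "i+1"] mid[of "i+2"] mid[of "i+3"] mid[of "i+4"] mid[of "i+5"] 3
      by (simp add: factor_Suc numeral_eq_Suc)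
    have "factor w (i+7) 5 \<in> set (bwords 5)" by (rule bwords_complete) simp
    then have "has_anti (factor w i (7+5))" unfolding e using fin3 fin3' by (cases c) auto
    then show ?thesis by (rule has_anti_factor)
  next
    case 4
    define n where "n = d div 3 + 1"
    have n1: "2*n < d" "d < 3*n" using 4 unfolding n_def by presburger+
    show ?thesis
    proof (rule witness[of 0 n 0 "d - 2*n" w i])
      show "0 < n" "0 < n" "d - 2*n < n" using n1 by auto
      show "w (i + 0) \<noteq> w (i + n + 0)" using c1 mid[of "i+n"] n1 by auto
      show "w (i + 0) \<noteq> w (i + 2*n + 0)" using c1 mid[of "i+2*n"] n1 by auto
      have "i + 2*n + (d - 2*n) = i + d" using n1 by simp
      then show "w (i + n + (d - 2*n)) \<noteq> w (i + 2*n + (d - 2*n))" using c2 mid[of "i+n+(d-2*n)"] n1 by auto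
    qed
  qed
qed


lemma R:
  fixes w :: "nat \<Rightarrow> bool"
  assumes nf: "\<not> contains_3antipower w" and h1: "w i \<noteq> w (Suc i)" and h2: "w (Suc i) = w (i+2)"
    and m: "Suc i \<le> m"
  shows "w m = w (Suc i)"
proof (rule ccontr)
  assume wm: "w m \<noteq> w (Suc i)"
  define S where "S = {m. i+2 < m \<and> w m \<noteq> w (Suc i)}"
  have "m \<noteq> Suc i" "m \<noteq> i + 2" using wm h2 by auto
  then have mS: "m \<in> S" unfolding S_def using wm m by simp
  define j where "j = (LEAST m. m \<in> S)"
  have jS: "j \<in> S" unfolding j_def using mS by (rule LeastI)
  have btw: "w k = (\<not> w i)" if "i < k" "k < j" for k
  proof (cases "k \<le> i + 2")
    case True
    then have "k = Suc i \<or> k = i + 2" using that by auto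
    then show ?thesis using h1 h2 by auto
  next
    case False
    then have "k \<notin> S" using that(2) unfolding j_def using not_less_Least by blast
    then show ?thesis using False h1 unfolding S_def by auto
  qed
  have "contains_3antipower w"
  proof (rule INT[of w i "w i" "j - i"])
    show "w i = w i" by simp
    show "w (i + (j - i)) = w i" using jS h1 unfolding S_def by auto
    show "\<And>k. i < k \<Longrightarrow> k < i + (j - i) \<Longrightarrow> w k = (\<not> w i)" using btw by auto
    show "3 \<le> j - i" using jS unfolding S_def by auto
  qed
  then show False using nf by simp
qed

abbreviation BB :: "(nat \<Rightarrow> bool) set" where "BB \<equiv> base_words \<union> complement ` base_words"

lemma omega_F: "omega [False] = (\<lambda>k. False)"
  by (simp add: omega_def fun_eq_iff)

lemma omega_FT: "omega [False, True] = (\<lambda>k. odd k)"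
proof
  fix k :: nat
  have e: "omega [False,True] k = [False,True] ! (k mod 2)" unfolding omega_def by (simp add: numeral_2_eq_2)
  have "k mod 2 = 0 \<or> k mod 2 = 1" by arith
  then show "omega [False, True] k = odd k" unfolding e by (auto simp: odd_iff_mod_2_eq_one)
qed

lemma prep_single: "prepend (replicate a False @ [True]) (omega [False]) = (\<lambda>k. k = a)"
  by (auto simp: fun_eq_iff prepend_def omega_F nth_append)

lemma prep_11: "prepend [True, True] (omega [False]) = (\<lambda>k. k < 2)"
  by (auto simp: fun_eq_iff prepend_def omega_F nth_Cons split: nat.split)

lemma prep_101: "prepend [True, False, True] (omega [False]) = (\<lambda>k. k = 0 \<or> k = 2)"
  by (auto simp: fun_eq_iff prepend_def omega_F nth_Cons split: nat.split)

lemma compl_eq: "complement f = (\<lambda>k. \<not> f k)"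
  by (simp add: complement_def fun_eq_iff)

lemma base_eq: "base_words = {(\<lambda>k. False), (\<lambda>k. odd k), (\<lambda>k. k < 2), (\<lambda>k. k = 0 \<or> k = 2)} \<union> {(\<lambda>k. k = a) | a. True}"
  unfolding base_words_def prep_single prep_11 prep_101 unfolding omega_FT omega_F by simp

lemma memc:
  assumes "(\<lambda>k. P k) \<in> BB"
  shows "(\<lambda>k. if P k then c else \<not> c) \<in> BB"
proof (cases c)
  case True then show ?thesis using assms by simp
next
  case False
  from assms show ?thesis
  proof
    assume "(\<lambda>k. P k) \<in> base_words"
    then have "complement (\<lambda>k. P k) \<in> complement ` base_words" by blast
    then show ?thesis using False by (simp add: compl_eq)
  next
    assume "(\<lambda>k. P k) \<in> complement ` base_words"
    then obtain x where x: "x \<in> base_words" "(\<lambda>k. P k) = complement x" by blast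
    then have "(\<lambda>k. \<not> P k) = x" by (simp add: compl_eq fun_eq_iff)
    then show ?thesis using x(1) False by simp
  qed
qed

lemma memc2:
  assumes "(\<lambda>k. P k) \<in> base_words"
  shows "(\<lambda>k. if \<not> P k then c else \<not> c) \<in> BB"
proof -
  have "complement (\<lambda>k. P k) \<in> BB" using assms by blast
  then have "(\<lambda>k. \<not> P k) \<in> BB" by (simp add: compl_eq)
  then show ?thesis by (rule memc)
qed

lemma mem_true: "(\<lambda>k. True) \<in> BB"
proof -
  have "complement (\<lambda>k. False) \<in> BB" unfolding base_eq by blast
  then show ?thesis by (simp add: compl_eq)
qed

lemma mem_single: "(\<lambda>k. k = a) \<in> BB" unfolding base_eq by blast
lemma mem_odd: "(\<lambda>k. odd k) \<in> BB" unfolding base_eq by blast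
lemma mem_11: "(\<lambda>k. k < 2) \<in> BB" unfolding base_eq by blast
lemma mem_101: "(\<lambda>k. k = 0 \<or> k = 2) \<in> BB" unfolding base_eq by blast
lemma mem_single_b: "(\<lambda>k. k = a) \<in> base_words" unfolding base_eq by blast
lemma mem_odd_b: "(\<lambda>k. odd k) \<in> base_words" unfolding base_eq by blast



lemma classify:
  fixes w :: "nat \<Rightarrow> bool"
  assumes nf: "\<not> contains_3antipower w"
  shows "w \<in> BB"
proof -
  define c where "c = w 0"
  show ?thesis
  proof (cases "\<forall>k. w k = c")
    case True
    then have "w = (\<lambda>k. if True then c else \<not> c)" by auto
    then show ?thesis using memc[OF mem_true] by simp
  next
    case False
    then have ex: "\<exists>k. w k \<noteq> c" by blast
    define a where "a = (LEAST k. w k \<noteq> c)"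
    have wa: "w a = (\<not> c)" using LeastI_ex[OF ex] unfolding a_def by auto
    have lt: "\<And>k. k < a \<Longrightarrow> w k = c" using not_less_Least unfolding a_def by blast
    have a1: "1 \<le> a" using wa c_def by (cases a) auto
    have wam: "w (a - 1) = c" using lt a1 by simp
    show ?thesis
    proof (cases "w (a+1) = (\<not> c)")
      case True
      have tail: "w m = (\<not> c)" if "a \<le> m" for m
      proof -
        have "w m = w (Suc (a - 1))"
          by (rule R[OF nf]) (use wam wa True a1 that in auto)
        then show ?thesis using a1 wa by simp
      qed
      consider "a = 1" | "a = 2" | "3 \<le> a" using a1 by linarith
      then show ?thesis
      proof cases
        case 1
        have "w = (\<lambda>k. if k = 0 then c else \<not> c)"
          using lt tail 1 by (auto simp: fun_eq_iff)
        then show ?thesis using memc[OF mem_single[of 0]] by simp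
      next
        case 2
        have "w = (\<lambda>k. if k < 2 then c else \<not> c)"
          using lt tail 2 by (auto simp: fun_eq_iff)
        then show ?thesis using memc[OF mem_11] by simp
      next
        case 3
        have "contains_3antipower w"
        proof (rule witness[of 1 2 0 0 w "a-3"])
          have i: "a - 3 + 1 = a - 2" "a - 3 + 2 + 1 = a" "a - 3 + 0 = a - 3" "a - 3 + 2 * 2 + 0 = a + 1"
            "a - 3 + 2 + 0 = a - 1" using 3 by auto
          show "w (a - 3 + 1) \<noteq> w (a - 3 + 2 + 1)" unfolding i using lt[of "a-2"] tail[of a] 3 by simp
          show "w (a - 3 + 0) \<noteq> w (a - 3 + 2 * 2 + 0)" unfolding i using lt[of "a-3"] tail[of "a+1"] 3 by simp
          show "w (a - 3 + 2 + 0) \<noteq> w (a - 3 + 2 * 2 + 0)" unfolding i using lt[of "a-1"] tail[of "a+1"] 3 by simp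
        qed auto
        then show ?thesis using nf by simp
      qed
    next
      case False
      then have wa1: "w (a+1) = c" by auto
      show ?thesis
      proof (cases "\<forall>k \<ge> a - 1. w (Suc k) \<noteq> w k")
        case True
        have alt: "w (a - 1 + j) = (if even j then c else \<not> c)" for j
        proof (induction j)
          case 0 then show ?case using wam by simp
        next
          case (Suc j)
          have "w (Suc (a - 1 + j)) \<noteq> w (a - 1 + j)" using True by simp
          then show ?case using Suc by auto
        qed
        show ?thesis
        proof (cases "a = 1")
          case True
          have "w = (\<lambda>k. if even k then c else \<not> c)"
            using alt True by (auto simp: fun_eq_iff)
          moreover have "(\<lambda>k. if \<not> odd k then c else \<not> c) \<in> BB" by (rule memc2[OF mem_odd_b])
          ultimately show ?thesis by simp
        next
          case False
          then have a2: "2 \<le> a" using a1 by simp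
          have e: "w (a - 2 + Suc j) = (if even j then c else \<not> c)" for j
          proof -
            have eq: "a - 2 + Suc j = a - 1 + j" using a2 by simp
            show ?thesis unfolding eq by (rule alt)
          qed
          have "contains_3antipower w"
          proof (rule witness[of 1 3 0 0 w "a-2"])
            have i: "a - 2 + 1 = a - 2 + Suc 0" "a - 2 + 3 + 1 = a - 2 + Suc 3" "a - 2 + 0 = a - 2"
              "a - 2 + 2 * 3 + 0 = a - 2 + Suc 5" "a - 2 + 3 + 0 = a - 2 + Suc 2" by simp_all
            show "w (a - 2 + 1) \<noteq> w (a - 2 + 3 + 1)" unfolding i using e[of 0] e[of 3] by simp
            show "w (a - 2 + 0) \<noteq> w (a - 2 + 2 * 3 + 0)" unfolding i using lt[of "a-2"] a2 e[of 5] by simp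
            show "w (a - 2 + 3 + 0) \<noteq> w (a - 2 + 2 * 3 + 0)" unfolding i using e[of 2] e[of 5] by simp
          qed auto
          then show ?thesis using nf by simp
        qed
      next
        case False
        then have exp: "\<exists>k. a - 1 \<le> k \<and> w (Suc k) = w k" by auto
        define p where "p = (LEAST k. a - 1 \<le> k \<and> w (Suc k) = w k)"
        have pP: "a - 1 \<le> p" "w (Suc p) = w p" using LeastI_ex[OF exp] unfolding p_def by auto
        have pmin: "\<And>k. a - 1 \<le> k \<Longrightarrow> k < p \<Longrightarrow> w (Suc k) \<noteq> w k"
          using not_less_Least unfolding p_def by blast
        have "p \<noteq> a - 1" using pP wa wam a1 by auto
        moreover have "p \<noteq> a" using pP wa wa1 by auto
        ultimately have pa: "a + 1 \<le> p" using pP by linarith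
        have tail: "w m = w p" if "p \<le> m" for m
        proof -
          have "w m = w (Suc (p - 1))"
            by (rule R[OF nf]) (use pmin[of "p-1"] pP pa that in auto)
          then show ?thesis using pa by simp
        qed
        consider "p = a + 1" | "p = a + 2" | "a + 3 \<le> p" using pa by linarith
        then show ?thesis
        proof cases
          case 1
          have "w = (\<lambda>k. if \<not> (k = a) then c else \<not> c)"
          proof
            fix k
            show "w k = (if \<not> (k = a) then c else \<not> c)"
            proof (cases "k < a")
              case True then show ?thesis using lt by simp
            next
              case False
              then have "k = a \<or> p \<le> k" using 1 by auto
              then show ?thesis using tail[of k] wa wa1 1 by auto
            qed
          qed
          then show ?thesis using memc2[OF mem_single_b[of a]] by simp
        next
          case 2
          have wa2: "w (a+2) = (\<not> c)" using pmin[of "a+1"] wa1 a1 2 by auto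
          show ?thesis
          proof (cases "a = 1")
            case True
            have "w = (\<lambda>k. if k = 0 \<or> k = 2 then c else \<not> c)"
            proof
              fix k
              show "w k = (if k = 0 \<or> k = 2 then c else \<not> c)"
                using lt[of 0] True wa wa1 wa2 tail[of k] 2
                by (cases "k < 3") (auto simp: less_Suc_eq numeral_eq_Suc)
            qed
            then show ?thesis using memc[OF mem_101] by simp
          next
            case False
            then have a2: "2 \<le> a" using a1 by simp
            have "contains_3antipower w"
            proof (rule witness[of 0 2 0 1 w "a-2"])
              have i: "a - 2 + 0 = a - 2" "a - 2 + 2 + 0 = a" "a - 2 + 2 * 2 + 0 = a + 2"
                "a - 2 + 2 + 1 = a + 1" "a - 2 + 2 * 2 + 1 = a + 3" using a2 by auto
              show "w (a - 2 + 0) \<noteq> w (a - 2 + 2 + 0)" unfolding i using lt[of "a-2"] a2 wa by simp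
              show "w (a - 2 + 0) \<noteq> w (a - 2 + 2 * 2 + 0)" unfolding i using lt[of "a-2"] a2 wa2 by simp
              show "w (a - 2 + 2 + 1) \<noteq> w (a - 2 + 2 * 2 + 1)" unfolding i using wa1 tail[of "a+3"] wa2 a2 2 by simp
            qed auto
            then show ?thesis using nf by simp
          qed
        next
          case 3
          have d1: "w (p - 1) \<noteq> w p" using pmin[of "p-1"] 3 by simp
          have d2: "w (p - 2) \<noteq> w (p - 1)"
          proof -
            have "Suc (p - 2) = p - 1" "a - 1 \<le> p - 2" "p - 2 < p" using 3 pa a1 by auto
            then show ?thesis using pmin[of "p-2"] by metis
          qed
          have d3: "w (p - 3) \<noteq> w (p - 2)"
          proof -
            have "Suc (p - 3) = p - 2" "a - 1 \<le> p - 3" "p - 3 < p" using 3 pa a1 by auto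
            then show ?thesis using pmin[of "p-3"] by metis
          qed
          have d4: "w (p - 4) \<noteq> w (p - 3)"
          proof -
            have "Suc (p - 4) = p - 3" "a - 1 \<le> p - 4" "p - 4 < p" using 3 pa a1 by auto
            then show ?thesis using pmin[of "p-4"] by metis
          qed
          have "contains_3antipower w"
          proof (rule witness[of 0 3 1 0 w "p-4"])
            have i1: "p - 4 + 3 = p - 1" "p - 4 + 1 = p - 3" "p - 4 + 2 * 3 + 1 = p + 3" "p - 4 + 2 * 3 + 0 = p + 2"
              "p - 4 + 3 + 0 = p - 1" "p - 4 + 0 = p - 4" using 3 a1 by auto
            show "w (p - 4 + 0) \<noteq> w (p - 4 + 3 + 0)" unfolding i1 using d1 d2 d3 d4 by auto
            show "w (p - 4 + 1) \<noteq> w (p - 4 + 2 * 3 + 1)" unfolding i1 using d1 d2 d3 tail[of "p+3"] by auto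
            show "w (p - 4 + 3 + 0) \<noteq> w (p - 4 + 2 * 3 + 0)" unfolding i1 using d1 tail[of "p+2"] by auto
          qed auto
          then show ?thesis using nf by simp
        qed
      qed
    qed
  qed
qed



abbreviation two_eq :: "(nat \<Rightarrow> bool) \<Rightarrow> nat \<Rightarrow> nat \<Rightarrow> bool" where
  "two_eq w s n \<equiv> (factor w s n = factor w (s+n) n \<or> factor w s n = factor w (s+2*n) n \<or> factor w (s+n) n = factor w (s+2*n) n)"

lemma free_if: "(\<And>s n. two_eq w s n) \<Longrightarrow> \<not> contains_3antipower w"
  unfolding contains_iff by blast

lemma one_true:
  fixes w :: "nat \<Rightarrow> bool"
  assumes h: "\<And>k. s \<le> k \<Longrightarrow> k < s+3*n \<Longrightarrow> w k \<Longrightarrow> k = t"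
  shows "two_eq w s n"
proof -
  have z: "\<not> w k" if "s \<le> k" "k < s + 3*n" "k \<noteq> t" for k using h that by blast
  consider "t < s + n" | "s + n \<le> t \<and> t < s + 2*n" | "s + 2*n \<le> t" by linarith
  then show ?thesis
  proof cases
    case 1
    have "factor w (s+n) n = factor w (s+2*n) n" unfolding factor_eq_iff
    proof (intro allI impI)
      fix k assume "k < n"
      then show "w (s + n + k) = w (s + 2*n + k)" using z[of "s+n+k"] z[of "s+2*n+k"] 1 by auto
    qed
    then show ?thesis by blast
  next
    case 2
    have "factor w s n = factor w (s+2*n) n" unfolding factor_eq_iff
    proof (intro allI impI)
      fix k assume "k < n"
      then show "w (s + k) = w (s + 2*n + k)" using z[of "s+k"] z[of "s+2*n+k"] 2 by auto
    qed
    then show ?thesis by blast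
  next
    case 3
    have "factor w s n = factor w (s+n) n" unfolding factor_eq_iff
    proof (intro allI impI)
      fix k assume "k < n"
      then show "w (s + k) = w (s + n + k)" using z[of "s+k"] z[of "s+n+k"] 3 by auto
    qed
    then show ?thesis by blast
  qed
qed

lemma contains_compl: "contains_3antipower (complement w) \<longleftrightarrow> contains_3antipower w"
  by (simp add: contains_iff factor_eq_iff complement_def)

lemma free_false: "\<not> contains_3antipower (\<lambda>k. False)"
  by (rule free_if) (simp add: factor_eq_iff)

lemma free_odd: "\<not> contains_3antipower (\<lambda>k. odd k)"
  by (rule free_if) (simp add: factor_eq_iff)

lemma free_single: "\<not> contains_3antipower (\<lambda>k. k = a)"
  by (rule free_if, rule one_true) auto

lemma free_11: "\<not> contains_3antipower (\<lambda>k. k < (2::nat))"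
proof (rule free_if)
  fix s n :: nat
  show "two_eq (\<lambda>k. k < 2) s n"
  proof (cases "s = 0")
    case False
    then show ?thesis by (intro one_true[of s n _ 1]) auto
  next
    case True
    consider "n = 0" | "n = 1" | "2 \<le> n" by linarith
    then show ?thesis
    proof cases
      case 3
      have "factor (\<lambda>k. k < (2::nat)) (s+n) n = factor (\<lambda>k. k < 2) (s+2*n) n"
        unfolding factor_eq_iff using 3 by auto
      then show ?thesis by blast
    qed (auto simp: True factor_eq_iff)
  qed
qed

lemma free_101: "\<not> contains_3antipower (\<lambda>k. k = 0 \<or> k = (2::nat))"
proof (rule free_if)
  fix s n :: nat
  show "two_eq (\<lambda>k. k = 0 \<or> k = (2::nat)) s n"
  proof (cases "s = 0")
    case False
    then show ?thesis by (intro one_true[of s n _ 2]) auto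
  next
    case True
    consider "n = 0" | "n = 1" | "n = 2" | "3 \<le> n" by linarith
    then show ?thesis
    proof cases
      case 2
      have "factor (\<lambda>k. k = 0 \<or> k = (2::nat)) s n = factor (\<lambda>k. k = 0 \<or> k = (2::nat)) (s+2*n) n"
        unfolding factor_eq_iff using 2 True by auto
      then show ?thesis by blast
    next
      case 3
      have "factor (\<lambda>k. k = 0 \<or> k = (2::nat)) s n = factor (\<lambda>k. k = 0 \<or> k = (2::nat)) (s+n) n"
        unfolding factor_eq_iff using 3 True by (auto simp: less_Suc_eq numeral_eq_Suc)
      then show ?thesis by blast
    next
      case 4
      have "factor (\<lambda>k. k = 0 \<or> k = (2::nat)) (s+n) n = factor (\<lambda>k. k = 0 \<or> k = (2::nat)) (s+2*n) n"
        unfolding factor_eq_iff using 4 by auto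
      then show ?thesis by blast
    qed (auto simp: True factor_eq_iff)
  qed
qed

lemma free_base: "x \<in> base_words \<Longrightarrow> \<not> contains_3antipower x"
  unfolding base_eq using free_false free_odd free_single free_11 free_101 by auto

theorem corollary6:
  fixes w :: "nat \<Rightarrow> bool"
  shows "\<not> contains_3antipower w \<longleftrightarrow> w \<in> base_words \<union> complement ` base_words"
proof
  assume "\<not> contains_3antipower w"
  then show "w \<in> base_words \<union> complement ` base_words" by (rule classify)
next
  assume "w \<in> base_words \<union> complement ` base_words"
  then show "\<not> contains_3antipower w"
    using free_base contains_compl by auto
qed

end
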